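(* Consider any run of Algorithm 1 (described in the context) under the standing assumption. For every $k\in\mathcal{K}$, if $k\in\mathcal{U}$ then $\delta_k>3(1-\eta)\epsilon_H/L_H$. Consequently, \[ \delta_k\ \ge\ \delta_{\min}:=\min\Big\{\delta_0,\ \tfrac{3\gamma_1(1-\eta)}{L_H}\,\epsilon_H\Big\}\in(0,\infty)\quad\text{for all }k\in\mathcal{K}. \]
   Context: Let $f:\mathbb{R}^n\to\mathbb{R}$ with gradient $g=\nabla f$ and Hessian $H=\nabla^2 f$; $\|\cdot\|$ is the Euclidean norm and $\lambda_{\min}(\cdot)$ the smallest eigenvalue of a symmetric matrix. Write $f_k=f(x_k)$, $g_k=g(x_k)$, $H_k=H(x_k)$ and $m_k(x):=f_k+g_k^T(x-x_k)+\tfrac12(x-x_k)^TH_k(x-x_k)$. Algorithm 1 (exact trust-region Newton method). Inputs: tolerances $\epsilon_g,\epsilon_H>0$; parameters $\gamma_1\in(0,1)$, $\gamma_2\in[1,\infty)$, $\psi\in(1/\gamma_2,1]$; $x_0\in\mathbb{R}^n$; $\delta_0>0$; $\delta_{\max}\ge\delta_0$; $\eta\in(0,1)$. For $k=0,1,2,\dots$: evaluate $g_k,H_k$; if $\|g_k\|\le\epsilon_g$, compute $\lambda_k=\lambda_{\min}(H_k)$ and, if $\lambda_k\ge-\epsilon_H$, return $x_k$ (terminate). Otherwise compute $s_k$ as a global solution of $\min_{s}\ m_k(x_k+s)+\tfrac12\epsilon_H\|s\|^2$ subject to $\|s\|\le\delta_k$. Set $\rho_k=\frac{f_k-f(x_k+s_k)}{m_k(x_k)-m_k(x_k+s_k)}$.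 If $\rho_k\ge\eta$: $x_{k+1}=x_k+s_k$, and $\delta_{k+1}=\min\{\gamma_2\delta_k,\delta_{\max}\}$ if $\|s_k\|\ge\psi\delta_k$, else $\delta_{k+1}=\delta_k$. If $\rho_k<\eta$: $x_{k+1}=x_k$ and $\delta_{k+1}=\gamma_1\|s_k\|$. $\mathcal{K}$ is the set of indices $k$ such that iteration $k$ is completed without termination; $\mathcal{U}=\{k\in\mathcal{K}:\rho_k<\eta\}$. Standing assumption: the sequence $\{f_k\}$ is bounded below by some $f_{\rm low}\in\mathbb{R}$, and all segments $[x_k,x_k+s_k]$ lie in an open set on which $f$ is twice continuously differentiable with gradient Lipschitz continuous with constant $L_g>0$ and Hessian Lipschitz continuous with constant $L_H>0$. *)

theory Defs
  imports "HOL-Analysis.Analysis"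
begin

text \<open>Real eigenvalues of a square matrix, and the smallest eigenvalue
  (meaningful for symmetric matrices, whose spectrum is real, finite and nonempty).\<close>
definition eigenvalues :: "real^'n^'n \<Rightarrow> real set" where
  "eigenvalues A = {\<mu>. \<exists>v. v \<noteq> 0 \<and> A *v v = \<mu> *\<^sub>R v}"

definition lambda_min :: "real^'n^'n \<Rightarrow> real" where
  "lambda_min A = Min (eigenvalues A)"

definition tr_model ::
  "(real^'n \<Rightarrow> real) \<Rightarrow> (real^'n \<Rightarrow> real^'n) \<Rightarrow> (real^'n \<Rightarrow> real^'n^'n)
     \<Rightarrow> real^'n \<Rightarrow> real^'n \<Rightarrow> real" where
  "tr_model f g H xk y = f xk + g xk \<bullet> (y - xk) + (1/2) * ((y - xk) \<bullet> (H xk *v (y - xk)))"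

definition tr_stop ::
  "(real^'n \<Rightarrow> real^'n) \<Rightarrow> (real^'n \<Rightarrow> real^'n^'n) \<Rightarrow> real \<Rightarrow> real \<Rightarrow> real^'n \<Rightarrow> bool" where
  "tr_stop g H eps_g eps_H xk \<longleftrightarrow> norm (g xk) \<le> eps_g \<and> lambda_min (H xk) \<ge> - eps_H"

definition tr_K ::
  "(real^'n \<Rightarrow> real^'n) \<Rightarrow> (real^'n \<Rightarrow> real^'n^'n) \<Rightarrow> real \<Rightarrow> real \<Rightarrow> (nat \<Rightarrow> real^'n) \<Rightarrow> nat set" where
  "tr_K g H eps_g eps_H x = {k. \<forall>j\<le>k. \<not> tr_stop g H eps_g eps_H (x j)}"

definition tr_rho ::
  "(real^'n \<Rightarrow> real) \<Rightarrow> (real^'n \<Rightarrow> real^'n) \<Rightarrow> (real^'n \<Rightarrow> real^'n^'n)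
     \<Rightarrow> real^'n \<Rightarrow> real^'n \<Rightarrow> real" where
  "tr_rho f g H xk sk = (f xk - f (xk + sk)) / (tr_model f g H xk xk - tr_model f g H xk (xk + sk))"

end

theory Submission
  imports Defs
begin

lemma line_deriv_f:
  fixes f :: "real^'n \<Rightarrow> real" and g :: "real^'n \<Rightarrow> real^'n"
  assumes "(f has_derivative (\<lambda>h. g (y + \<tau> *\<^sub>R w) \<bullet> h)) (at (y + \<tau> *\<^sub>R w))"
  shows "((\<lambda>t. f (y + t *\<^sub>R w)) has_real_derivative (g (y + \<tau> *\<^sub>R w) \<bullet> w)) (at \<tau>)"
proof -
  have l: "((\<lambda>t. y + t *\<^sub>R w) has_derivative (\<lambda>t. t *\<^sub>R w)) (at \<tau>)"
    by (auto intro!: derivative_eq_intros)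
  have "((\<lambda>t. f (y + t *\<^sub>R w)) has_derivative (\<lambda>t. g (y + \<tau> *\<^sub>R w) \<bullet> (t *\<^sub>R w))) (at \<tau>)"
    using has_derivative_compose[OF l assms] .
  moreover have "(\<lambda>t. t * c) = (*) c" for c :: real by (rule ext) simp
  ultimately show ?thesis unfolding has_field_derivative_def
    by simp
qed

lemma line_deriv_g:
  fixes g :: "real^'n \<Rightarrow> real^'n" and H :: "real^'n \<Rightarrow> real^'n^'n"
  assumes "(g has_derivative (\<lambda>h. H (y + \<tau> *\<^sub>R w) *v h)) (at (y + \<tau> *\<^sub>R w))"
  shows "((\<lambda>t. g (y + t *\<^sub>R w) \<bullet> u) has_real_derivative ((H (y + \<tau> *\<^sub>R w) *v w) \<bullet> u)) (at \<tau>)"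
proof -
  have l: "((\<lambda>t. y + t *\<^sub>R w) has_derivative (\<lambda>t. t *\<^sub>R w)) (at \<tau>)"
    by (auto intro!: derivative_eq_intros)
  have "((\<lambda>t. g (y + t *\<^sub>R w)) has_derivative (\<lambda>t. H (y + \<tau> *\<^sub>R w) *v (t *\<^sub>R w))) (at \<tau>)"
    using has_derivative_compose[OF l assms] .
  then have "((\<lambda>t. g (y + t *\<^sub>R w) \<bullet> u) has_derivative (\<lambda>t. (H (y + \<tau> *\<^sub>R w) *v (t *\<^sub>R w)) \<bullet> u)) (at \<tau>)"
    by (auto intro!: derivative_eq_intros)
  moreover have "(\<lambda>t. t * c) = (*) c" for c :: real by (rule ext) simp
  ultimately show ?thesis unfolding has_field_derivative_def
    by (simp add: matrix_vector_mult_scaleR)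
qed

lemma seg_pt: "0 \<le> \<tau> \<Longrightarrow> \<tau> \<le> 1 \<Longrightarrow> x + \<tau> *\<^sub>R s \<in> closed_segment x (x + s)"
  unfolding in_segment(1)
  by (rule exI[of _ \<tau>]) (simp add: algebra_simps)

lemma onorm_mv:
  fixes A :: "real^'n^'n"
  shows "norm (A *v v) \<le> onorm (\<lambda>v. A *v v) * norm v"
  using onorm[OF matrix_vector_mul_bounded_linear[of A]] by simp

lemma taylor_upper:
  fixes f :: "real^'n \<Rightarrow> real" and g :: "real^'n \<Rightarrow> real^'n" and H :: "real^'n \<Rightarrow> real^'n^'n"
  assumes seg: "closed_segment x (x + s) \<subseteq> S"
    and grad: "\<And>y. y \<in> S \<Longrightarrow> (f has_derivative (\<lambda>h. g y \<bullet> h)) (at y)"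
    and hess: "\<And>y. y \<in> S \<Longrightarrow> (g has_derivative (\<lambda>h. H y *v h)) (at y)"
    and LH: "\<And>y z. y \<in> S \<Longrightarrow> z \<in> S \<Longrightarrow> onorm (\<lambda>v. (H y - H z) *v v) \<le> L * norm (y - z)"
  shows "f (x + s) \<le> f x + g x \<bullet> s + (1/2) * (s \<bullet> (H x *v s)) + L / 6 * norm s ^ 3"
proof -
  have inS: "x + \<tau> *\<^sub>R s \<in> S" if "0 \<le> \<tau>" "\<tau> \<le> 1" for \<tau>
    using seg seg_pt[OF that] by blast
  have x: "x \<in> S" using inS[of 0] by simp
  define c where "c = s \<bullet> (H x *v s)"
  define chi where "chi \<tau> = g (x + \<tau> *\<^sub>R s) \<bullet> s - g x \<bullet> s - \<tau> * c" for \<tau>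
  define th where "th \<tau> = f (x + \<tau> *\<^sub>R s) - f x - \<tau> * (g x \<bullet> s) - \<tau>\<^sup>2 / 2 * c" for \<tau>
  have dchi: "(chi has_real_derivative ((H (x + \<tau> *\<^sub>R s) *v s) \<bullet> s - c)) (at \<tau>)"
    if "0 \<le> \<tau>" "\<tau> \<le> 1" for \<tau>
    unfolding chi_def
    using line_deriv_g[of g H x \<tau> s s, OF hess[OF inS[OF that]]]
    by (auto intro!: derivative_eq_intros)
  have dth: "(th has_real_derivative chi \<tau>) (at \<tau>)" if "0 \<le> \<tau>" "\<tau> \<le> 1" for \<tau>
    unfolding th_def
    using line_deriv_f[of f g x \<tau> s, OF grad[OF inS[OF that]]]
    by (auto intro!: derivative_eq_intros simp: chi_def power2_eq_square algebra_simps)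
  have bd: "(H (x + \<tau> *\<^sub>R s) *v s) \<bullet> s - c \<le> L * norm s ^ 3 * \<tau>" if "0 \<le> \<tau>" "\<tau> \<le> 1" for \<tau>
  proof -
    have "(H (x + \<tau> *\<^sub>R s) *v s) \<bullet> s - c = ((H (x + \<tau> *\<^sub>R s) - H x) *v s) \<bullet> s"
      by (simp add: c_def matrix_vector_mult_diff_rdistrib inner_diff_left inner_diff_right inner_commute)
    also have "\<dots> \<le> norm ((H (x + \<tau> *\<^sub>R s) - H x) *v s) * norm s"
      by (rule norm_cauchy_schwarz)
    also have "\<dots> \<le> (onorm (\<lambda>v. (H (x + \<tau> *\<^sub>R s) - H x) *v v) * norm s) * norm s"
      by (rule mult_right_mono[OF onorm_mv]) simp
    also have "\<dots> \<le> ((L * norm (x + \<tau> *\<^sub>R s - x)) * norm s) * norm s"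
      by (intro mult_right_mono LH inS that x) auto
    also have "\<dots> = L * norm s ^ 3 * \<tau>"
      using that by (simp add: power3_eq_cube)
    finally show ?thesis .
  qed
  have chibd: "chi t \<le> L * norm s ^ 3 * t\<^sup>2 / 2" if "0 \<le> t" "t \<le> 1" for t
  proof -
    define p where "p \<tau> = L * norm s ^ 3 * \<tau>\<^sup>2 / 2 - chi \<tau>" for \<tau>
    have "p 0 \<le> p t"
    proof (rule DERIV_nonneg_imp_nondecreasing[OF that(1)])
      fix \<tau> assume "0 \<le> \<tau>" "\<tau> \<le> t"
      then have "0 \<le> \<tau>" "\<tau> \<le> 1" using that by auto
      show "\<exists>y. (p has_real_derivative y) (at \<tau>) \<and> 0 \<le> y"
        apply (rule exI[of _ "L * norm s ^ 3 * \<tau> - ((H (x + \<tau> *\<^sub>R s) *v s) \<bullet> s - c)"])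
        using bd[OF \<open>0 \<le> \<tau>\<close> \<open>\<tau> \<le> 1\<close>] dchi[OF \<open>0 \<le> \<tau>\<close> \<open>\<tau> \<le> 1\<close>] unfolding p_def
        by (auto intro!: derivative_eq_intros)
    qed
    moreover have "p 0 = 0" by (simp add: p_def chi_def)
    ultimately show ?thesis by (simp add: p_def)
  qed
  define q where "q \<tau> = L * norm s ^ 3 * \<tau> ^ 3 / 6 - th \<tau>" for \<tau>
  have "q 0 \<le> q 1"
  proof (rule DERIV_nonneg_imp_nondecreasing[of 0 1, OF zero_le_one])
    fix \<tau> :: real assume h: "0 \<le> \<tau>" "\<tau> \<le> 1"
    show "\<exists>y. (q has_real_derivative y) (at \<tau>) \<and> 0 \<le> y"
      apply (rule exI[of _ "L * norm s ^ 3 * \<tau>\<^sup>2 / 2 - chi \<tau>"])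
      using chibd[OF h] dth[OF h] unfolding q_def
      by (auto intro!: derivative_eq_intros simp: power2_eq_square power3_eq_cube)
  qed
  moreover have "q 0 = 0" by (simp add: q_def th_def)
  ultimately show ?thesis by (simp add: q_def th_def c_def)
qed

lemma grad_diff_bound:
  fixes g :: "real^'n \<Rightarrow> real^'n" and H :: "real^'n \<Rightarrow> real^'n^'n"
  assumes x: "x \<in> S" and t: "t > 0" and L: "L \<ge> 0"
    and pts: "\<And>\<tau>. 0 \<le> \<tau> \<Longrightarrow> \<tau> \<le> t \<Longrightarrow> y + \<tau> *\<^sub>R v \<in> S \<and> norm (y + \<tau> *\<^sub>R v - x) \<le> R"
    and hess: "\<And>y. y \<in> S \<Longrightarrow> (g has_derivative (\<lambda>h. H y *v h)) (at y)"
    and LH: "\<And>y z. y \<in> S \<Longrightarrow> z \<in> S \<Longrightarrow> onorm (\<lambda>v. (H y - H z) *v v) \<le> L * norm (y - z)"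
  shows "\<bar>g (y + t *\<^sub>R v) \<bullet> u - g y \<bullet> u - t * ((H x *v v) \<bullet> u)\<bar> \<le> L * R * norm v * norm u * t"
proof -
  define c where "c = (H x *v v) \<bullet> u"
  define chi where "chi \<tau> = g (y + \<tau> *\<^sub>R v) \<bullet> u - \<tau> * c" for \<tau>
  have d: "(chi has_real_derivative ((H (y + \<tau> *\<^sub>R v) *v v) \<bullet> u - c)) (at \<tau>)"
    if "0 \<le> \<tau>" "\<tau> \<le> t" for \<tau>
    unfolding chi_def
    using line_deriv_g[of g H y \<tau> v u, OF hess] pts[OF that]
    by (auto intro!: derivative_eq_intros)
  obtain z where z: "0 < z" "z < t" "chi t - chi 0 = (t - 0) * ((H (y + z *\<^sub>R v) *v v) \<bullet> u - c)"
    using MVT2[OF t, of chi "\<lambda>\<tau>. (H (y + \<tau> *\<^sub>R v) *v v) \<bullet> u - c"] d by auto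
  have "\<bar>(H (y + z *\<^sub>R v) *v v) \<bullet> u - c\<bar> = \<bar>((H (y + z *\<^sub>R v) - H x) *v v) \<bullet> u\<bar>"
    by (simp add: c_def matrix_vector_mult_diff_rdistrib inner_diff_left)
  also have "\<dots> \<le> norm ((H (y + z *\<^sub>R v) - H x) *v v) * norm u"
    by (rule Cauchy_Schwarz_ineq2)
  also have "\<dots> \<le> (onorm (\<lambda>w. (H (y + z *\<^sub>R v) - H x) *v w) * norm v) * norm u"
    by (rule mult_right_mono[OF onorm_mv]) simp
  also have "\<dots> \<le> ((L * norm (y + z *\<^sub>R v - x)) * norm v) * norm u"
    using z pts[of z] by (intro mult_right_mono LH x) auto
  also have "\<dots> \<le> ((L * R) * norm v) * norm u"
    using z pts[of z] L by (intro mult_right_mono mult_left_mono) auto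
  finally have b: "\<bar>(H (y + z *\<^sub>R v) *v v) \<bullet> u - c\<bar> \<le> L * R * norm v * norm u" .
  have "\<bar>chi t - chi 0\<bar> = t * \<bar>(H (y + z *\<^sub>R v) *v v) \<bullet> u - c\<bar>"
    using z t by (simp add: abs_mult)
  also have "\<dots> \<le> t * (L * R * norm v * norm u)"
    using b t by (intro mult_left_mono) auto
  finally show ?thesis by (simp add: chi_def c_def algebra_simps)
qed

lemma second_diff_bound:
  fixes f :: "real^'n \<Rightarrow> real" and g :: "real^'n \<Rightarrow> real^'n" and H :: "real^'n \<Rightarrow> real^'n^'n"
  assumes x: "x \<in> S" and t: "t > 0" and L: "L \<ge> 0"
    and pts: "\<And>\<sigma> \<tau>. 0 \<le> \<sigma> \<Longrightarrow> \<sigma> \<le> t \<Longrightarrow> 0 \<le> \<tau> \<Longrightarrow> \<tau> \<le> t \<Longrightarrow>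
        x + \<sigma> *\<^sub>R u + \<tau> *\<^sub>R v \<in> S \<and> norm (\<sigma> *\<^sub>R u + \<tau> *\<^sub>R v) \<le> R"
    and grad: "\<And>y. y \<in> S \<Longrightarrow> (f has_derivative (\<lambda>h. g y \<bullet> h)) (at y)"
    and hess: "\<And>y. y \<in> S \<Longrightarrow> (g has_derivative (\<lambda>h. H y *v h)) (at y)"
    and LH: "\<And>y z. y \<in> S \<Longrightarrow> z \<in> S \<Longrightarrow> onorm (\<lambda>v. (H y - H z) *v v) \<le> L * norm (y - z)"
  shows "\<bar>f (x + t *\<^sub>R u + t *\<^sub>R v) - f (x + t *\<^sub>R u) - f (x + t *\<^sub>R v) + f x - t\<^sup>2 * ((H x *v v) \<bullet> u)\<bar>
           \<le> L * R * norm v * norm u * t\<^sup>2"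
proof -
  define c where "c = (H x *v v) \<bullet> u"
  define psi where "psi \<sigma> = f ((x + t *\<^sub>R v) + \<sigma> *\<^sub>R u) - f (x + \<sigma> *\<^sub>R u) - \<sigma> * t * c" for \<sigma>
  have inS1: "(x + t *\<^sub>R v) + \<sigma> *\<^sub>R u \<in> S" if "0 \<le> \<sigma>" "\<sigma> \<le> t" for \<sigma>
    using pts[OF that, of t] t by (simp add: algebra_simps)
  have inS2: "x + \<sigma> *\<^sub>R u \<in> S" if "0 \<le> \<sigma>" "\<sigma> \<le> t" for \<sigma>
    using pts[OF that, of 0] t by simp
  have d: "(psi has_real_derivative (g ((x + t *\<^sub>R v) + \<sigma> *\<^sub>R u) \<bullet> u - g (x + \<sigma> *\<^sub>R u) \<bullet> u - t * c)) (at \<sigma>)"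
    if "0 \<le> \<sigma>" "\<sigma> \<le> t" for \<sigma>
    unfolding psi_def
    using line_deriv_f[of f g "x + t *\<^sub>R v" \<sigma> u, OF grad[OF inS1[OF that]]]
      line_deriv_f[of f g x \<sigma> u, OF grad[OF inS2[OF that]]]
    by (auto intro!: derivative_eq_intros)
  obtain z where z: "0 < z" "z < t"
    "psi t - psi 0 = (t - 0) * (g ((x + t *\<^sub>R v) + z *\<^sub>R u) \<bullet> u - g (x + z *\<^sub>R u) \<bullet> u - t * c)"
    using MVT2[OF t, of psi "\<lambda>\<sigma>. g ((x + t *\<^sub>R v) + \<sigma> *\<^sub>R u) \<bullet> u - g (x + \<sigma> *\<^sub>R u) \<bullet> u - t * c"] d
    by auto
  have gb: "\<bar>g ((x + z *\<^sub>R u) + t *\<^sub>R v) \<bullet> u - g (x + z *\<^sub>R u) \<bullet> u - t * c\<bar> \<le> L * R * norm v * norm u * t"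
    unfolding c_def
  proof (rule grad_diff_bound[OF x t L _ hess LH])
    fix \<tau> assume "0 \<le> \<tau>" "\<tau> \<le> t"
    then show "x + z *\<^sub>R u + \<tau> *\<^sub>R v \<in> S \<and> norm (x + z *\<^sub>R u + \<tau> *\<^sub>R v - x) \<le> R"
      using pts[of z \<tau>] z by simp
  qed
  have e: "(x + t *\<^sub>R v) + z *\<^sub>R u = (x + z *\<^sub>R u) + t *\<^sub>R v" by (simp add: algebra_simps)
  have "\<bar>psi t - psi 0\<bar> = t * \<bar>g ((x + z *\<^sub>R u) + t *\<^sub>R v) \<bullet> u - g (x + z *\<^sub>R u) \<bullet> u - t * c\<bar>"
    using z t e by (simp add: abs_mult)
  also have "\<dots> \<le> t * (L * R * norm v * norm u * t)"
    using gb t by (intro mult_left_mono) auto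
  finally have "\<bar>psi t - psi 0\<bar> \<le> L * R * norm v * norm u * t\<^sup>2"
    by (simp add: power2_eq_square algebra_simps)
  moreover have "x + t *\<^sub>R v + t *\<^sub>R u = x + t *\<^sub>R u + t *\<^sub>R v" by (simp add: algebra_simps)
  ultimately show ?thesis
    by (simp add: psi_def c_def power2_eq_square algebra_simps)
qed

lemma le_lin_imp_nonpos:
  fixes d C a :: real
  assumes "a > 0" "C \<ge> 0" "\<And>t. 0 < t \<Longrightarrow> t \<le> a \<Longrightarrow> d \<le> C * t"
  shows "d \<le> 0"
proof (rule ccontr)
  assume "\<not> d \<le> 0"
  define t where "t = min a (d / (2 * (C + 1)))"
  have t: "0 < t" "t \<le> a" using assms \<open>\<not> d \<le> 0\<close> by (auto simp: t_def)
  have "C * t \<le> C * (d / (2 * (C + 1)))" using assms(2) by (intro mult_left_mono) (auto simp: t_def)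
  also have "\<dots> < d"
  proof -
    have "0 \<le> C * d" using assms(2) \<open>\<not> d \<le> 0\<close> by simp
    moreover have "C + 1 > 0" using assms(2) by simp
    moreover have "C * (d / (2 * (C + 1))) * (2 * (C + 1)) = C * d"
      using \<open>C + 1 > 0\<close> by (simp add: field_simps)
    moreover have "C * d < d * (2 * (C + 1))"
      using \<open>0 \<le> C * d\<close> \<open>\<not> d \<le> 0\<close> by (simp add: algebra_simps)
    ultimately have "C * (d / (2 * (C + 1))) * (2 * (C + 1)) < d * (2 * (C + 1))"
      by simp
    then show ?thesis using \<open>C + 1 > 0\<close> by (simp only: mult_less_cancel_right) simp
  qed
  finally show False using assms(3)[OF t] by simp
qed

lemma hess_sym:
  fixes f :: "real^'n \<Rightarrow> real" and g :: "real^'n \<Rightarrow> real^'n" and H :: "real^'n \<Rightarrow> real^'n^'n"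
  assumes S: "open S" and x: "x \<in> S" and L: "L \<ge> 0"
    and grad: "\<And>y. y \<in> S \<Longrightarrow> (f has_derivative (\<lambda>h. g y \<bullet> h)) (at y)"
    and hess: "\<And>y. y \<in> S \<Longrightarrow> (g has_derivative (\<lambda>h. H y *v h)) (at y)"
    and LH: "\<And>y z. y \<in> S \<Longrightarrow> z \<in> S \<Longrightarrow> onorm (\<lambda>v. (H y - H z) *v v) \<le> L * norm (y - z)"
  shows "(H x *v v) \<bullet> u = (H x *v u) \<bullet> v"
proof -
  obtain r where r: "r > 0" "cball x r \<subseteq> S" using open_contains_cball S x by blast
  define N where "N = norm u + norm v + 1"
  have N: "N > 0" by (simp add: N_def add_nonneg_pos)
  define C where "C = 2 * L * N * norm v * norm u"
  have C: "C \<ge> 0" using L N by (simp add: C_def)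
  have main: "\<bar>(H x *v v) \<bullet> u - (H x *v u) \<bullet> v\<bar> \<le> C * t" if t: "0 < t" "t \<le> r / N" for t
  proof -
    have tN: "t * N \<le> r" using t N by (simp add: field_simps)
    have pts: "x + \<sigma> *\<^sub>R a + \<tau> *\<^sub>R b \<in> S \<and> norm (\<sigma> *\<^sub>R a + \<tau> *\<^sub>R b) \<le> t * N"
      if "0 \<le> \<sigma>" "\<sigma> \<le> t" "0 \<le> \<tau>" "\<tau> \<le> t" "norm a + norm b + 1 = N" for \<sigma> \<tau> a b
    proof -
      have "norm (\<sigma> *\<^sub>R a + \<tau> *\<^sub>R b) \<le> \<sigma> * norm a + \<tau> * norm b"
        using norm_triangle_ineq[of "\<sigma> *\<^sub>R a" "\<tau> *\<^sub>R b"] that by simp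
      also have "\<dots> \<le> t * norm a + t * norm b"
        using that by (intro add_mono mult_right_mono) auto
      also have "\<dots> \<le> t * N"
      proof -
        have "t * N = t * (norm a + norm b + 1)" using that by simp
        then have "t * N = t * norm a + t * norm b + t" by (simp add: algebra_simps)
        then show ?thesis using t by linarith
      qed
      finally have n: "norm (\<sigma> *\<^sub>R a + \<tau> *\<^sub>R b) \<le> t * N" .
      have "dist x (x + (\<sigma> *\<^sub>R a + \<tau> *\<^sub>R b)) = norm (\<sigma> *\<^sub>R a + \<tau> *\<^sub>R b)"
        by (metis add_diff_cancel_left' dist_norm dist_commute)
      then have "x + \<sigma> *\<^sub>R a + \<tau> *\<^sub>R b \<in> cball x r"
        using tN n by (simp add: add.assoc)
      then show ?thesis using r n by blast
    qed
    have b1: "\<bar>f (x + t *\<^sub>R u + t *\<^sub>R v) - f (x + t *\<^sub>R u) - f (x + t *\<^sub>R v) + f x - t\<^sup>2 * ((H x *v v) \<bullet> u)\<bar>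
           \<le> L * (t * N) * norm v * norm u * t\<^sup>2"
      by (rule second_diff_bound[OF x t(1) L _ grad hess LH]) (rule pts, auto simp: N_def)
    have b2: "\<bar>f (x + t *\<^sub>R v + t *\<^sub>R u) - f (x + t *\<^sub>R v) - f (x + t *\<^sub>R u) + f x - t\<^sup>2 * ((H x *v u) \<bullet> v)\<bar>
           \<le> L * (t * N) * norm u * norm v * t\<^sup>2"
      by (rule second_diff_bound[OF x t(1) L _ grad hess LH]) (rule pts, auto simp: N_def)
    have e: "x + t *\<^sub>R v + t *\<^sub>R u = x + t *\<^sub>R u + t *\<^sub>R v" by (simp add: algebra_simps)
    define D where "D = f (x + t *\<^sub>R u + t *\<^sub>R v) - f (x + t *\<^sub>R u) - f (x + t *\<^sub>R v) + f x"
    define E where "E = L * (t * N) * norm v * norm u * t\<^sup>2"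
    have b1': "\<bar>D - t\<^sup>2 * ((H x *v v) \<bullet> u)\<bar> \<le> E" using b1 by (simp add: D_def E_def)
    have b2': "\<bar>D - t\<^sup>2 * ((H x *v u) \<bullet> v)\<bar> \<le> E" using b2 unfolding e
      by (simp add: D_def E_def algebra_simps)
    have "\<bar>t\<^sup>2 * ((H x *v v) \<bullet> u) - t\<^sup>2 * ((H x *v u) \<bullet> v)\<bar> \<le> 2 * E"
      using b1' b2' by linarith
    moreover have "t\<^sup>2 * ((H x *v v) \<bullet> u) - t\<^sup>2 * ((H x *v u) \<bullet> v) = t\<^sup>2 * ((H x *v v) \<bullet> u - (H x *v u) \<bullet> v)"
      by (simp only: right_diff_distrib)
    moreover have "2 * E = t\<^sup>2 * (C * t)" by (simp add: E_def C_def)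
    ultimately have "t\<^sup>2 * \<bar>(H x *v v) \<bullet> u - (H x *v u) \<bullet> v\<bar> \<le> t\<^sup>2 * (C * t)"
      by (simp add: abs_mult)
    then show ?thesis using t by (simp add: power2_eq_square)
  qed
  have "\<bar>(H x *v v) \<bullet> u - (H x *v u) \<bullet> v\<bar> \<le> 0"
    by (rule le_lin_imp_nonpos[of "r / N" C]) (use r N C main in auto)
  then show ?thesis by simp
qed

lemma quad_scale:
  fixes A :: "real^'n^'n"
  shows "(c *\<^sub>R w) \<bullet> (A *v (c *\<^sub>R w)) = c\<^sup>2 * (w \<bullet> (A *v w))"
  by (simp add: matrix_vector_mult_scaleR power2_eq_square)

lemma quad_expand:
  fixes A :: "real^'n^'n"
  assumes sym: "\<And>u v. (A *v v) \<bullet> u = (A *v u) \<bullet> v"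
  shows "(a + t *\<^sub>R w) \<bullet> (A *v (a + t *\<^sub>R w)) = a \<bullet> (A *v a) + 2 * t * (w \<bullet> (A *v a)) + t\<^sup>2 * (w \<bullet> (A *v w))"
proof -
  have "a \<bullet> (A *v w) = w \<bullet> (A *v a)" using sym[of w a] by (simp add: inner_commute)
  then show ?thesis
    by (simp add: matrix_vector_right_distrib matrix_vector_mult_scaleR inner_add_left inner_add_right
        power2_eq_square algebra_simps)
qed

lemma sym_eig_exists:
  fixes A :: "real^'n^'n"
  assumes sym: "\<And>u v. (A *v v) \<bullet> u = (A *v u) \<bullet> v"
  shows "eigenvalues A \<noteq> {}"
proof -
  define q where "q v = v \<bullet> (A *v v)" for v :: "real^'n"
  have cont: "continuous_on (sphere 0 1) q"
    unfolding q_def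
    by (intro continuous_intros linear_continuous_on matrix_vector_mul_bounded_linear)
  obtain e :: "real^'n" where "norm e = 1" using vector_choose_size[of 1] by auto
  then have ne: "sphere (0::real^'n) 1 \<noteq> {}" by auto
  obtain v0 where v0: "v0 \<in> sphere 0 1" "\<And>y. y \<in> sphere 0 1 \<Longrightarrow> q v0 \<le> q y"
    using continuous_attains_inf[OF compact_sphere ne cont] by blast
  define \<mu> where "\<mu> = q v0"
  have v0n: "v0 \<bullet> v0 = 1" using v0(1) by (metis power2_norm_eq_inner mem_sphere_0 power_one)
  define r where "r y = q y - \<mu> * (y \<bullet> y)" for y
  have rpos: "r y \<ge> 0" for y
  proof (cases "y = 0")
    case True then show ?thesis by (simp add: r_def q_def)
  next
    case False
    define y' where "y' = (1 / norm y) *\<^sub>R y"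
    have "y' \<in> sphere 0 1" using False by (simp add: y'_def)
    then have "\<mu> \<le> q y'" using v0(2) by (simp add: \<mu>_def)
    moreover have "q y = (norm y)\<^sup>2 * q y'"
      using quad_scale[of "norm y" y' A] False by (simp add: y'_def q_def)
    moreover have "y \<bullet> y = (norm y)\<^sup>2" by (simp add: power2_norm_eq_inner)
    ultimately show ?thesis unfolding r_def
      by (metis diff_ge_0_iff_ge mult.commute mult_right_mono zero_le_power2)
  qed
  define w where "w = A *v v0 - \<mu> *\<^sub>R v0"
  have r0: "r v0 = 0" by (simp add: r_def v0n \<mu>_def)
  have wq: "w \<bullet> (A *v v0) - \<mu> * (w \<bullet> v0) = w \<bullet> w"
    by (simp add: w_def inner_diff_right inner_diff_left algebra_simps)
  have exp: "r (v0 + t *\<^sub>R w) = 2 * t * (w \<bullet> w) + t\<^sup>2 * r w" for t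
  proof -
    have "(v0 + t *\<^sub>R w) \<bullet> (v0 + t *\<^sub>R w) = v0 \<bullet> v0 + 2 * t * (w \<bullet> v0) + t\<^sup>2 * (w \<bullet> w)"
      by (simp add: inner_add_left inner_add_right power2_eq_square algebra_simps inner_commute)
    then show ?thesis
      using quad_expand[OF sym, of v0 t w] r0 wq unfolding r_def q_def
      by (simp add: algebra_simps)
  qed
  have "w = 0"
  proof (rule ccontr)
    assume "w \<noteq> 0"
    then have c: "w \<bullet> w > 0" by simp
    define R where "R = r w"
    have R: "R \<ge> 0" using rpos by (simp add: R_def)
    define t where "t = - (w \<bullet> w) / (R + 1)"
    have "0 \<le> 2 * t * (w \<bullet> w) + t\<^sup>2 * R" using rpos[of "v0 + t *\<^sub>R w"] exp[of t] by (simp add: R_def)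
    moreover have "2 * t * (w \<bullet> w) + t\<^sup>2 * R = - (w \<bullet> w)\<^sup>2 * (R + 2) / (R + 1)\<^sup>2"
    proof -
      have "R + 1 \<noteq> 0" using R by simp
      then show ?thesis unfolding t_def by (simp add: divide_simps) (simp add: algebra_simps power2_eq_square)
    qed
    moreover have "- (w \<bullet> w)\<^sup>2 * (R + 2) / (R + 1)\<^sup>2 < 0"
      using R c by (intro divide_neg_pos) (auto intro!: mult_pos_pos)
    ultimately show False by linarith
  qed
  then have "A *v v0 = \<mu> *\<^sub>R v0" by (simp add: w_def)
  moreover have "v0 \<noteq> 0" using v0(1) by auto
  ultimately show ?thesis unfolding eigenvalues_def by blast
qed

lemma sym_eig_finite:
  fixes A :: "real^'n^'n"
  assumes sym: "\<And>u v. (A *v v) \<bullet> u = (A *v u) \<bullet> v"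
  shows "finite (eigenvalues A)"
proof -
  define ev where "ev \<mu> = (SOME v. v \<noteq> 0 \<and> A *v v = \<mu> *\<^sub>R v)" for \<mu>
  have ev: "ev \<mu> \<noteq> 0 \<and> A *v ev \<mu> = \<mu> *\<^sub>R ev \<mu>" if "\<mu> \<in> eigenvalues A" for \<mu>
  proof -
    have "\<exists>v. v \<noteq> 0 \<and> A *v v = \<mu> *\<^sub>R v" using that unfolding eigenvalues_def by simp
    from someI_ex[OF this] show ?thesis unfolding ev_def .
  qed
  have inj: "inj_on ev (eigenvalues A)"
  proof (rule inj_onI)
    fix a b assume ab: "a \<in> eigenvalues A" "b \<in> eigenvalues A" "ev a = ev b"
    then have "a *\<^sub>R ev a = b *\<^sub>R ev a" using ev[of a] ev[of b] by metis
    then show "a = b" using ev[OF ab(1)] by simp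
  qed
  have po: "pairwise orthogonal (ev ` eigenvalues A)"
  proof (rule pairwiseI)
    fix a b assume "a \<in> ev ` eigenvalues A" "b \<in> ev ` eigenvalues A" "a \<noteq> b"
    then obtain \<mu> la where m: "\<mu> \<in> eigenvalues A" "la \<in> eigenvalues A" "a = ev \<mu>" "b = ev la" "\<mu> \<noteq> la"
      by auto
    have "\<mu> * (a \<bullet> b) = (A *v a) \<bullet> b" using ev[OF m(1)] m(3) by simp
    also have "\<dots> = (A *v b) \<bullet> a" using sym[of a b] by simp
    also have "\<dots> = la * (a \<bullet> b)" using ev[OF m(2)] m(4) by (simp add: inner_commute)
    finally have "(\<mu> - la) * (a \<bullet> b) = 0" by (simp add: algebra_simps)
    then show "orthogonal a b" using m(5) by (simp add: orthogonal_def)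
  qed
  have "0 \<notin> ev ` eigenvalues A" using ev by auto
  then have "finite (ev ` eigenvalues A)"
    using independent_imp_finite pairwise_orthogonal_independent po by blast
  then show ?thesis using finite_imageD inj by blast
qed

lemma lambda_min_ge:
  fixes A :: "real^'n^'n"
  assumes sym: "\<And>u v. (A *v v) \<bullet> u = (A *v u) \<bullet> v"
    and q: "\<And>v. c * (v \<bullet> v) \<le> v \<bullet> (A *v v)"
  shows "c \<le> lambda_min A"
  unfolding lambda_min_def
proof (subst Min_ge_iff[OF sym_eig_finite[OF sym] sym_eig_exists[OF sym]], intro ballI)
  fix \<mu> assume "\<mu> \<in> eigenvalues A"
  then obtain v where v: "v \<noteq> 0" "A *v v = \<mu> *\<^sub>R v" unfolding eigenvalues_def by auto
  have "c * (v \<bullet> v) \<le> \<mu> * (v \<bullet> v)" using q[of v] v by simp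
  moreover have "v \<bullet> v > 0" using v by simp
  ultimately show "c \<le> \<mu>" by simp
qed

theorem lemma2p2:
  fixes f :: "real^'n \<Rightarrow> real"
    and g :: "real^'n \<Rightarrow> real^'n"
    and H :: "real^'n \<Rightarrow> real^'n^'n"
    and x s :: "nat \<Rightarrow> real^'n"
    and \<delta> :: "nat \<Rightarrow> real"
    and eps_g eps_H \<gamma>1 \<gamma>2 \<psi> \<delta>0 \<delta>max \<eta> f_low L_g L_H :: real
    and S :: "(real^'n) set"
  assumes eps_g: "eps_g > 0" and eps_H: "eps_H > 0"
    and gamma1: "0 < \<gamma>1" "\<gamma>1 < 1"
    and gamma2: "\<gamma>2 \<ge> 1"
    and psi: "1 / \<gamma>2 < \<psi>" "\<psi> \<le> 1"
    and delta0: "\<delta>0 > 0" "\<delta>max \<ge> \<delta>0" "\<delta> 0 = \<delta>0"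
    and eta: "0 < \<eta>" "\<eta> < 1"
    (* the subproblem: s_k is a global solution of the regularized trust-region subproblem *)
    and step: "\<And>k. k \<in> tr_K g H eps_g eps_H x \<Longrightarrow>
        norm (s k) \<le> \<delta> k \<and>
        (\<forall>s'. norm s' \<le> \<delta> k \<longrightarrow>
           tr_model f g H (x k) (x k + s k) + (1/2) * eps_H * (norm (s k))\<^sup>2
             \<le> tr_model f g H (x k) (x k + s') + (1/2) * eps_H * (norm s')\<^sup>2)"
    (* successful iterations *)
    and succ: "\<And>k. k \<in> tr_K g H eps_g eps_H x \<Longrightarrow> tr_rho f g H (x k) (s k) \<ge> \<eta> \<Longrightarrow>
        x (Suc k) = x k + s k \<and>
        \<delta> (Suc k) = (if norm (s k) \<ge> \<psi> * \<delta> k then min (\<gamma>2 * \<delta> k) \<delta>max else \<delta> k)"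
    (* unsuccessful iterations *)
    and unsucc: "\<And>k. k \<in> tr_K g H eps_g eps_H x \<Longrightarrow> tr_rho f g H (x k) (s k) < \<eta> \<Longrightarrow>
        x (Suc k) = x k \<and> \<delta> (Suc k) = \<gamma>1 * norm (s k)"
    (* standing assumption *)
    and f_low: "\<And>k. f (x k) \<ge> f_low"
    and S_open: "open S"
    and segs: "\<And>k. k \<in> tr_K g H eps_g eps_H x \<Longrightarrow> closed_segment (x k) (x k + s k) \<subseteq> S"
    and grad: "\<And>y. y \<in> S \<Longrightarrow> (f has_derivative (\<lambda>h. g y \<bullet> h)) (at y)"
    and hess: "\<And>y. y \<in> S \<Longrightarrow> (g has_derivative (\<lambda>h. H y *v h)) (at y)"
    and hess_cont: "continuous_on S H"
    and Lg: "L_g > 0" "\<And>y z. y \<in> S \<Longrightarrow> z \<in> S \<Longrightarrow> norm (g y - g z) \<le> L_g * norm (y - z)"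
    and LH: "L_H > 0" "\<And>y z. y \<in> S \<Longrightarrow> z \<in> S \<Longrightarrow>
        onorm (\<lambda>v. (H y - H z) *v v) \<le> L_H * norm (y - z)"
  shows "(\<forall>k \<in> tr_K g H eps_g eps_H x.
            tr_rho f g H (x k) (s k) < \<eta> \<longrightarrow> \<delta> k > 3 * (1 - \<eta>) * eps_H / L_H)
       \<and> 0 < min \<delta>0 (3 * \<gamma>1 * (1 - \<eta>) / L_H * eps_H)
       \<and> (\<forall>k \<in> tr_K g H eps_g eps_H x. \<delta> k \<ge> min \<delta>0 (3 * \<gamma>1 * (1 - \<eta>) / L_H * eps_H))"
proof -
  let ?K = "tr_K g H eps_g eps_H x"
  define dmin where "dmin = min \<delta>0 (3 * \<gamma>1 * (1 - \<eta>) / L_H * eps_H)"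
  have Kdown: "k \<in> ?K" if "Suc k \<in> ?K" for k using that by (auto simp: tr_K_def)
  have Knot: "\<not> tr_stop g H eps_g eps_H (x k)" if "k \<in> ?K" for k using that by (auto simp: tr_K_def)
  have xS: "x k \<in> S" if "k \<in> ?K" for k using segs[OF that] by auto
  have symH: "(H (x k) *v v) \<bullet> u = (H (x k) *v u) \<bullet> v" if "k \<in> ?K" for k u v
    using hess_sym[OF S_open xS[OF that] _ grad hess LH(2)] LH(1) by simp
  have mod0: "tr_model f g H y y = f y" for y by (simp add: tr_model_def)
  have mod1: "tr_model f g H y (y + w) = f y + g y \<bullet> w + (1/2) * (w \<bullet> (H y *v w))" for y w
    by (simp add: tr_model_def)
  have opt: "0 \<le> g (x k) \<bullet> w + (1/2) * (w \<bullet> (H (x k) *v w)) + (1/2) * eps_H * (norm w)\<^sup>2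
       - (g (x k) \<bullet> s k + (1/2) * (s k \<bullet> (H (x k) *v s k)) + (1/2) * eps_H * (norm (s k))\<^sup>2)"
    if "k \<in> ?K" "norm w \<le> \<delta> k" for k w
    using step[OF that(1)] that(2) by (auto simp: mod1)
  have nz: "s k \<noteq> 0" if k: "k \<in> ?K" and dpos: "\<delta> k > 0" for k
  proof
    assume s0: "s k = 0"
    let ?G = "g (x k)" and ?A = "H (x k)"
    have opt0: "0 \<le> ?G \<bullet> w + (1/2) * (w \<bullet> (?A *v w)) + (1/2) * eps_H * (norm w)\<^sup>2"
      if "norm w \<le> \<delta> k" for w using opt[OF k that] s0 by simp
    show False
    proof (cases "?G = 0")
      case False
      define a where "a = ?G \<bullet> (?A *v ?G) + eps_H * (norm ?G)\<^sup>2"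
      define t where "t = min (\<delta> k / norm ?G) ((norm ?G)\<^sup>2 / (\<bar>a\<bar> + 1))"
      have nG: "norm ?G > 0" using False by simp
      have t: "t > 0" using nG dpos by (simp add: t_def)
      have "norm ((- t) *\<^sub>R ?G) \<le> \<delta> k"
        using t nG by (simp add: t_def) (simp add: field_simps min_def split: if_splits)
      from opt0[OF this] have "0 \<le> - t * (norm ?G)\<^sup>2 + (1/2) * t\<^sup>2 * a"
        using quad_scale[of "- t" ?G ?A] t
        by (simp add: a_def power2_norm_eq_inner power_mult_distrib algebra_simps)
      then have "t * (norm ?G)\<^sup>2 \<le> t * ((1/2) * t * a)" by (simp add: power2_eq_square algebra_simps)
      then have h: "(norm ?G)\<^sup>2 \<le> (1/2) * t * a" using t by simp
      have "t * a \<le> t * \<bar>a\<bar>" using t by (intro mult_left_mono) auto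
      also have "\<dots> \<le> (norm ?G)\<^sup>2 / (\<bar>a\<bar> + 1) * \<bar>a\<bar>" by (intro mult_right_mono) (auto simp: t_def)
      also have "\<dots> < (norm ?G)\<^sup>2" using nG by (simp add: field_simps)
      finally show False using h zero_le_power2[of "norm ?G"] by linarith
    next
      case True
      have q: "(- eps_H) * (v \<bullet> v) \<le> v \<bullet> (?A *v v)" for v
      proof (cases "v = 0")
        case True then show ?thesis by simp
      next
        case False
        define c where "c = \<delta> k / norm v"
        have c: "c > 0" using False dpos by (simp add: c_def)
        have "norm (c *\<^sub>R v) \<le> \<delta> k" using c False dpos by (simp add: c_def)
        from opt0[OF this] True have o: "0 \<le> (1/2) * ((c *\<^sub>R v) \<bullet> (?A *v (c *\<^sub>R v))) + (1/2) * eps_H * (norm (c *\<^sub>R v))\<^sup>2"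
          by simp
        have n2: "(norm (c *\<^sub>R v))\<^sup>2 = c\<^sup>2 * (v \<bullet> v)"
          by (simp add: power_mult_distrib power2_norm_eq_inner[symmetric])
        have e: "c\<^sup>2 * ((1/2) * (v \<bullet> (?A *v v)) + (1/2) * eps_H * (v \<bullet> v))
            = (1/2) * (c\<^sup>2 * (v \<bullet> (?A *v v))) + (1/2) * eps_H * (c\<^sup>2 * (v \<bullet> v))"
          by (simp add: algebra_simps)
        have "0 \<le> c\<^sup>2 * ((1/2) * (v \<bullet> (?A *v v)) + (1/2) * eps_H * (v \<bullet> v))"
          using o unfolding e n2 quad_scale .
        then have "0 \<le> (1/2) * (v \<bullet> (?A *v v)) + (1/2) * eps_H * (v \<bullet> v)"
          using c by (simp add: zero_le_mult_iff)
        then show ?thesis by simp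
      qed
      have "- eps_H \<le> lambda_min ?A"
        by (rule lambda_min_ge[OF symH[OF k] q])
      then have "tr_stop g H eps_g eps_H (x k)" using True eps_g by (simp add: tr_stop_def)
      then show False using Knot[OF k] by simp
    qed
  qed
  have big: "norm (s k) > 3 * (1 - \<eta>) * eps_H / L_H"
    if k: "k \<in> ?K" and dpos: "\<delta> k > 0" and rho: "tr_rho f g H (x k) (s k) < \<eta>" for k
  proof (rule ccontr)
    assume "\<not> ?thesis"
    then have small: "norm (s k) * L_H \<le> 3 * (1 - \<eta>) * eps_H" using LH(1) by (simp add: field_simps)
    let ?s = "s k" and ?y = "x k"
    define n where "n = norm ?s"
    have n: "n > 0" using nz[OF k dpos] by (simp add: n_def)
    define P where "P = tr_model f g H ?y ?y - tr_model f g H ?y (?y + ?s)"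
    have P: "P \<ge> (1/2) * eps_H * n\<^sup>2"
      using opt[OF k, of 0] dpos unfolding P_def mod0 mod1 n_def by simp
    have "0 < (1/2) * eps_H * n\<^sup>2" using n eps_H by simp
    then have Ppos: "P > 0" using P by linarith
    have tay: "f (?y + ?s) \<le> f ?y + g ?y \<bullet> ?s + (1/2) * (?s \<bullet> (H ?y *v ?s)) + L_H / 6 * n ^ 3"
      unfolding n_def by (rule taylor_upper[OF segs[OF k] grad hess LH(2)])
    have A: "f ?y - f (?y + ?s) \<ge> P - L_H / 6 * n ^ 3"
      using tay unfolding P_def mod0 mod1 by simp
    have "L_H / 6 * n ^ 3 = (n * L_H) * n\<^sup>2 / 6" by (simp add: power2_eq_square power3_eq_cube)
    also have "\<dots> \<le> (3 * (1 - \<eta>) * eps_H) * n\<^sup>2 / 6"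
      using small n by (intro divide_right_mono mult_right_mono) (auto simp: n_def)
    also have "\<dots> = (1 - \<eta>) * ((1/2) * eps_H * n\<^sup>2)" by simp
    also have "\<dots> \<le> (1 - \<eta>) * P" using P eta by (intro mult_left_mono) auto
    finally have "\<eta> * P \<le> f ?y - f (?y + ?s)" using A by (simp add: algebra_simps)
    then have "\<eta> \<le> tr_rho f g H ?y ?s"
      unfolding tr_rho_def P_def[symmetric] using Ppos by (simp add: field_simps)
    then show False using rho by simp
  qed
  have dminpos: "dmin > 0"
    using delta0 gamma1 eta LH(1) eps_H by (simp add: dmin_def)
  have inv: "k \<in> ?K \<longrightarrow> dmin \<le> \<delta> k \<and> \<delta> k \<le> \<delta>max" for k
  proof (induction k)
    case 0 then show ?case using delta0 by (simp add: dmin_def)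
  next
    case (Suc k)
    show ?case
    proof
      assume sk: "Suc k \<in> ?K"
      have k: "k \<in> ?K" using Kdown[OF sk] .
      with Suc have ih: "dmin \<le> \<delta> k" "\<delta> k \<le> \<delta>max" by auto
      have dpos: "\<delta> k > 0" using ih dminpos by simp
      show "dmin \<le> \<delta> (Suc k) \<and> \<delta> (Suc k) \<le> \<delta>max"
      proof (cases "tr_rho f g H (x k) (s k) \<ge> \<eta>")
        case True
        have "\<delta> k \<le> \<gamma>2 * \<delta> k" using gamma2 dpos by simp
        then show ?thesis using succ[OF k True] ih by auto
      next
        case False
        then have r: "tr_rho f g H (x k) (s k) < \<eta>" by simp
        have d: "\<delta> (Suc k) = \<gamma>1 * norm (s k)" using unsucc[OF k r] by simp
        have "3 * \<gamma>1 * (1 - \<eta>) / L_H * eps_H = \<gamma>1 * (3 * (1 - \<eta>) * eps_H / L_H)" by simp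
        then have "dmin \<le> \<gamma>1 * (3 * (1 - \<eta>) * eps_H / L_H)" unfolding dmin_def by linarith
        also have "\<dots> \<le> \<gamma>1 * norm (s k)"
          using big[OF k dpos r] gamma1 by (intro mult_left_mono) auto
        finally have 1: "dmin \<le> \<delta> (Suc k)" using d by simp
        have "\<gamma>1 * norm (s k) \<le> 1 * \<delta> k"
          using step[OF k] gamma1 by (intro mult_mono) auto
        then show ?thesis using 1 d ih by simp
      qed
    qed
  qed
  show ?thesis
  proof (intro conjI ballI impI)
    fix k assume k: "k \<in> ?K" and r: "tr_rho f g H (x k) (s k) < \<eta>"
    have dpos: "\<delta> k > 0" using inv[of k] k dminpos by simp
    show "\<delta> k > 3 * (1 - \<eta>) * eps_H / L_H"
      using big[OF k dpos r] step[OF k] by simp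
  next
    show "0 < min \<delta>0 (3 * \<gamma>1 * (1 - \<eta>) / L_H * eps_H)" using dminpos by (simp add: dmin_def)
  next
    fix k assume k: "k \<in> ?K"
    show "min \<delta>0 (3 * \<gamma>1 * (1 - \<eta>) / L_H * eps_H) \<le> \<delta> k" using inv[of k] k by (simp add: dmin_def)
  qed
qed

end
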